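(* Let $Q=ABA'B'$ be a quadrilateral in $K^2$ (possibly improper), let $(h,k)$ be the centroid of $Q$, and let $(a,b)\in K^2$ be a diagonal point of $Q$ that is not at infinity. Then the bisector locus of $Q$ is given by $$\Phi_Q(X-h,Y-k)=\Phi_Q(a-h,b-k),$$ i.e. it is the set of $(x,y)\in K^2$ with $\Phi_Q(x-h,y-k)=\Phi_Q(a-h,b-k)$. Thus the bisector locus is a conic with center $(h,k)$.
   Context: $K$ is a field of characteristic $\neq 2$, and we work in the affine plane $K^2$ (regarded inside the projective plane, so lines have points at infinity). Every line $L$ has an equation $tX-uY+v=0$ normalized so that $t=1$ if $u=0$ and $u=1$ if $u\neq 0$; these coefficients are denoted $t_L,u_L,v_L$. A quadrilateral $Q=ABA'B'$ consists of four distinct lines $A,B,A',B'$ (the sides), not all through one point, such that adjacent sides ($A,B$; $B,A'$; $A',B'$; $B',A$) are not parallel; opposite sides ($A,A'$ and $B,B'$) may be parallel. The vertices are $A\cap B$, $B\cap A'$, $A'\cap B'$, $B'\cap A$; three sides may pass through a common point (then two vertices coincide and $Q$ is called improper; otherwise proper). The diagonals are the lines through nonadjacent vertices ($A\cap B$ and $A'\cap B'$; $B\cap A'$ and $B'\cap A$). The centroid is the midpoint of the midpoints of the diagonals (equivalently, the average of the four vertices). A diagonal point of $Q$ is the intersection point (possibly at infinity) of a pair of opposite sides or of the two diagonals. Define $\alpha=t_Au_Bu_{A'}u_{B'}-u_At_Bu_{A'}u_{B'}+u_Au_Bt_{A'}u_{B'}-u_Au_Bu_{A'}t_{B'}$,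 $\beta=t_Au_Bt_{A'}u_{B'}-u_At_Bu_{A'}t_{B'}$, $\gamma=t_At_Bt_{A'}u_{B'}-t_At_Bu_{A'}t_{B'}+t_Au_Bt_{A'}t_{B'}-u_At_Bt_{A'}t_{B'}$, and the quadratic form $\Phi_Q(X,Y)=\gamma X^2-2\beta XY+\alpha Y^2$. A line $\ell$ crosses a pair of lines $\{\ell_1,\ell_2\}$ if $\ell$ is distinct from both and not parallel to both; then $\mathrm{mid}_{\{\ell_1,\ell_2\}}(\ell)$ is the midpoint of the two points where $\ell$ meets $\ell_1$ and $\ell_2$, except that if one of these points is at infinity it is defined to be the point at infinity of $\ell$. A line $\ell$ bisects $Q$ if $\mathrm{mid}_{\mathsf P}(\ell)=\mathrm{mid}_{\mathsf P'}(\ell)$ for all pairs $\mathsf P,\mathsf P'$ among the two pairs of opposite sides $\{A,A'\},\{B,B'\}$ that $\ell$ crosses; this common point is the midpoint $\mathrm{mid}_Q(\ell)$ of the bisector $\ell$. The bisector locus of $Q$ is the set of midpoints of the bisectors of $Q$. *)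

theory Defs
  imports Main
begin

text \<open>Lines of the affine plane K^2 are represented by their normalized coefficient
  triples (t, u, v): the line is t X - u Y + v = 0, with t = 1 if u = 0 and u = 1 if u \<noteq> 0.\<close>

type_synonym 'a line = "'a \<times> 'a \<times> 'a"
type_synonym 'a point = "'a \<times> 'a"

definition tL :: "'a line \<Rightarrow> 'a" where "tL L = fst L"
definition uL :: "'a line \<Rightarrow> 'a" where "uL L = fst (snd L)"
definition vL :: "'a line \<Rightarrow> 'a" where "vL L = snd (snd L)"

definition is_line :: "('a::field) line \<Rightarrow> bool" where
  "is_line L \<longleftrightarrow> (uL L = 0 \<and> tL L = 1) \<or> uL L = 1"

definition on_line :: "('a::field) line \<Rightarrow> 'a point \<Rightarrow> bool" where
  "on_line L p \<longleftrightarrow> tL L * fst p - uL L * snd p + vL L = 0"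

text \<open>Parallel (same direction; equal lines count as parallel too, which is harmless
  since the definitions below only apply it to distinct lines or also require distinctness).\<close>
definition parallel :: "('a::field) line \<Rightarrow> 'a line \<Rightarrow> bool" where
  "parallel L M \<longleftrightarrow> tL L * uL M - uL L * tL M = 0"

definition meet :: "('a::field) line \<Rightarrow> 'a line \<Rightarrow> 'a point" where
  "meet L M = (THE p. on_line L p \<and> on_line M p)"

text \<open>Points of the projective plane: affine points and points at infinity;
  the point at infinity of a line L is represented by its (normalized) direction data (t_L,u_L).\<close>
datatype 'a ppoint = Aff "'a \<times> 'a" | Inf "'a \<times> 'a"

definition inf_pt :: "('a::field) line \<Rightarrow> 'a ppoint" where
  "inf_pt L = Inf (tL L, uL L)"

definition quadrilateral :: "('a::field) line \<Rightarrow> 'a line \<Rightarrow> 'a line \<Rightarrow> 'a line \<Rightarrow> bool" where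
  "quadrilateral A B A' B' \<longleftrightarrow>
     is_line A \<and> is_line B \<and> is_line A' \<and> is_line B' \<and>
     distinct [A, B, A', B'] \<and>
     \<not> (\<exists>p. on_line A p \<and> on_line B p \<and> on_line A' p \<and> on_line B' p) \<and>
     \<not> parallel A B \<and> \<not> parallel B A' \<and> \<not> parallel A' B' \<and> \<not> parallel B' A"

definition vertices :: "('a::field) line \<Rightarrow> 'a line \<Rightarrow> 'a line \<Rightarrow> 'a line \<Rightarrow> 'a point list" where
  "vertices A B A' B' = [meet A B, meet B A', meet A' B', meet B' A]"

definition centroid :: "('a::field) line \<Rightarrow> 'a line \<Rightarrow> 'a line \<Rightarrow> 'a line \<Rightarrow> 'a point" where
  "centroid A B A' B' =
     (let vs = vertices A B A' B'
      in ((\<Sum>p\<leftarrow>vs. fst p) / 4, (\<Sum>p\<leftarrow>vs. snd p) / 4))"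

definition on_line_thru :: "('a::field) point \<Rightarrow> 'a point \<Rightarrow> 'a point \<Rightarrow> bool" where
  "on_line_thru p q r \<longleftrightarrow>
     (fst q - fst p) * (snd r - snd p) - (snd q - snd p) * (fst r - fst p) = 0"

text \<open>Affine (i.e. not at infinity) diagonal points: the intersection of a pair of opposite
  sides, or of the two diagonals, when it is a point of K^2.\<close>
definition affine_diagonal_point ::
  "('a::field) line \<Rightarrow> 'a line \<Rightarrow> 'a line \<Rightarrow> 'a line \<Rightarrow> 'a point \<Rightarrow> bool" where
  "affine_diagonal_point A B A' B' p \<longleftrightarrow>
     (on_line A p \<and> on_line A' p) \<or>
     (on_line B p \<and> on_line B' p) \<or>
     (on_line_thru (meet A B) (meet A' B') p \<and> on_line_thru (meet B A') (meet B' A) p)"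

definition alphaQ :: "('a::field) line \<Rightarrow> 'a line \<Rightarrow> 'a line \<Rightarrow> 'a line \<Rightarrow> 'a" where
  "alphaQ A B A' B' =
     tL A * uL B * uL A' * uL B' - uL A * tL B * uL A' * uL B'
     + uL A * uL B * tL A' * uL B' - uL A * uL B * uL A' * tL B'"

definition betaQ :: "('a::field) line \<Rightarrow> 'a line \<Rightarrow> 'a line \<Rightarrow> 'a line \<Rightarrow> 'a" where
  "betaQ A B A' B' = tL A * uL B * tL A' * uL B' - uL A * tL B * uL A' * tL B'"

definition gammaQ :: "('a::field) line \<Rightarrow> 'a line \<Rightarrow> 'a line \<Rightarrow> 'a line \<Rightarrow> 'a" where
  "gammaQ A B A' B' =
     tL A * tL B * tL A' * uL B' - tL A * tL B * uL A' * tL B'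
     + tL A * uL B * tL A' * tL B' - uL A * tL B * tL A' * tL B'"

definition PhiQ :: "('a::field) line \<Rightarrow> 'a line \<Rightarrow> 'a line \<Rightarrow> 'a line \<Rightarrow> 'a \<Rightarrow> 'a \<Rightarrow> 'a" where
  "PhiQ A B A' B' X Y =
     gammaQ A B A' B' * X^2 - 2 * betaQ A B A' B' * X * Y + alphaQ A B A' B' * Y^2"

definition crosses :: "('a::field) line \<Rightarrow> 'a line \<Rightarrow> 'a line \<Rightarrow> bool" where
  "crosses l L1 L2 \<longleftrightarrow> l \<noteq> L1 \<and> l \<noteq> L2 \<and> \<not> (parallel l L1 \<and> parallel l L2)"

definition mid_pair :: "('a::field) line \<Rightarrow> 'a line \<Rightarrow> 'a line \<Rightarrow> 'a ppoint" where
  "mid_pair L1 L2 l =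
     (if parallel l L1 \<or> parallel l L2 then inf_pt l
      else (let p = meet l L1; q = meet l L2
            in Aff ((fst p + fst q) / 2, (snd p + snd q) / 2)))"

definition bisects :: "('a::field) line \<Rightarrow> 'a line \<Rightarrow> 'a line \<Rightarrow> 'a line \<Rightarrow> 'a line \<Rightarrow> bool" where
  "bisects A B A' B' l \<longleftrightarrow> is_line l \<and>
     (crosses l A A' \<and> crosses l B B' \<longrightarrow> mid_pair A A' l = mid_pair B B' l)"

definition bisector_mid ::
  "('a::field) line \<Rightarrow> 'a line \<Rightarrow> 'a line \<Rightarrow> 'a line \<Rightarrow> 'a line \<Rightarrow> 'a ppoint \<Rightarrow> bool" where
  "bisector_mid A B A' B' l P \<longleftrightarrow> bisects A B A' B' l \<and>
     ((crosses l A A' \<and> P = mid_pair A A' l) \<or> (crosses l B B' \<and> P = mid_pair B B' l))"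

definition bisector_locus :: "('a::field) line \<Rightarrow> 'a line \<Rightarrow> 'a line \<Rightarrow> 'a line \<Rightarrow> 'a ppoint set" where
  "bisector_locus A B A' B' = {P. \<exists>l. bisector_mid A B A' B' l P}"

end

theory Submission
  imports Defs
begin

section \<open>Algebraic core\<close>

definition Dg :: "'a::field \<Rightarrow> 'a \<Rightarrow> 'a \<Rightarrow> 'a \<Rightarrow> 'a \<Rightarrow> 'a \<Rightarrow> 'a \<Rightarrow> 'a \<Rightarrow> 'a \<Rightarrow> 'a \<Rightarrow> 'a \<Rightarrow> 'a \<Rightarrow> 'a \<Rightarrow> 'a \<Rightarrow> 'a" where
"Dg tA uA vA tB uB vB tC uC vC tE uE vE x y =
 ((tA*x - uA*y + vA)*tC + (tC*x - uC*y + vC)*tA) * (-((tB*x - uB*y + vB)*uE + (tE*x-uE*y+vE)*uB))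
 - (-((tA*x - uA*y + vA)*uC + (tC*x-uC*y+vC)*uA)) * ((tB*x-uB*y+vB)*tE + (tE*x-uE*y+vE)*tB)"

definition alg :: "'a::field \<Rightarrow> 'a \<Rightarrow> 'a \<Rightarrow> 'a \<Rightarrow> 'a \<Rightarrow> 'a \<Rightarrow> 'a \<Rightarrow> 'a \<Rightarrow> 'a" where
"alg tA uA tB uB tC uC tE uE = tA*uB*uC*uE - uA*tB*uC*uE + uA*uB*tC*uE - uA*uB*uC*tE"
definition beg :: "'a::field \<Rightarrow> 'a \<Rightarrow> 'a \<Rightarrow> 'a \<Rightarrow> 'a \<Rightarrow> 'a \<Rightarrow> 'a \<Rightarrow> 'a \<Rightarrow> 'a" where
"beg tA uA tB uB tC uC tE uE = tA*uB*tC*uE - uA*tB*uC*tE"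
definition gag :: "'a::field \<Rightarrow> 'a \<Rightarrow> 'a \<Rightarrow> 'a \<Rightarrow> 'a \<Rightarrow> 'a \<Rightarrow> 'a \<Rightarrow> 'a \<Rightarrow> 'a" where
"gag tA uA tB uB tC uC tE uE = tA*tB*tC*uE - tA*tB*uC*tE + tA*uB*tC*tE - uA*tB*tC*tE"
definition Phg :: "'a::field \<Rightarrow> 'a \<Rightarrow> 'a \<Rightarrow> 'a \<Rightarrow> 'a \<Rightarrow> 'a \<Rightarrow> 'a \<Rightarrow> 'a \<Rightarrow> 'a \<Rightarrow> 'a \<Rightarrow> 'a" where
"Phg tA uA tB uB tC uC tE uE X Y = gag tA uA tB uB tC uC tE uE * X^2 - 2 * beg tA uA tB uB tC uC tE uE * X * Y + alg tA uA tB uB tC uC tE uE * Y^2"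

lemma center_plain:
  fixes tA uA vA tB uB vB tC uC vC tE uE vE x0 y0 x1 y1 x2 y2 x3 y3 h k x y a b :: "'a::field"
  assumes e1: "tA*x0 - uA*y0 + vA = 0" and e2: "tB*x0 - uB*y0 + vB = 0"
    and e3: "tB*x1 - uB*y1 + vB = 0" and e4: "tC*x1 - uC*y1 + vC = 0"
    and e5: "tC*x2 - uC*y2 + vC = 0" and e6: "tE*x2 - uE*y2 + vE = 0"
    and e7: "tE*x3 - uE*y3 + vE = 0" and e8: "tA*x3 - uA*y3 + vA = 0"
    and hh: "4*h = x0+x1+x2+x3" and kk: "4*k = y0+y1+y2+y3"
  shows "Dg tA uA vA tB uB vB tC uC vC tE uE vE x y + 2*Phg tA uA tB uB tC uC tE uE (x-h) (y-k)
       = Dg tA uA vA tB uB vB tC uC vC tE uE vE a b + 2*Phg tA uA tB uB tC uC tE uE (a-h) (b-k)"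
proof -
  have hx: "gag tA uA tB uB tC uC tE uE * (x0+x1+x2+x3) - beg tA uA tB uB tC uC tE uE * (y0+y1+y2+y3) - (tA*tB*uC*vE - tA*tB*uE*vC - 2*tA*tC*uB*vE - 2*tA*tC*uE*vB - tA*tE*uB*vC + tA*tE*uC*vB + tB*tC*uA*vE - tB*tC*uE*vA + 2*tB*tE*uA*vC + 2*tB*tE*uC*vA + tC*tE*uA*vB - tC*tE*uB*vA) = (- tB*tE*uC + tC*tE*uB)*(tA*x0 - uA*y0 + vA) + (tA*tC*uE - tC*tE*uA)*(tB*x0 - uB*y0 + vB) + (tA*tC*uE - tA*tE*uC)*(tB*x1 - uB*y1 + vB) + (tA*tE*uB - tB*tE*uA)*(tC*x1 - uC*y1 + vC) + (tA*tB*uE - tB*tE*uA)*(tC*x2 - uC*y2 + vC) + (- tA*tB*uC + tA*tC*uB)*(tE*x2 - uE*y2 + vE) + (tA*tC*uB - tB*tC*uA)*(tE*x3 - uE*y3 + vE) + (tB*tC*uE - tB*tE*uC)*(tA*x3 - uA*y3 + vA)"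
    unfolding gag_def beg_def by algebra
  have hy: "alg tA uA tB uB tC uC tE uE * (y0+y1+y2+y3) - beg tA uA tB uB tC uC tE uE * (x0+x1+x2+x3) - (tA*uB*uC*vE + 2*tA*uB*uE*vC + tA*uC*uE*vB - 2*tB*uA*uC*vE - tB*uA*uE*vC - tB*uC*uE*vA + tC*uA*uB*vE + tC*uA*uE*vB + 2*tC*uB*uE*vA - tE*uA*uB*vC - 2*tE*uA*uC*vB - tE*uB*uC*vA) = (tB*uC*uE - tC*uB*uE)*(tA*x0 - uA*y0 + vA) + (- tA*uC*uE + tE*uA*uC)*(tB*x0 - uB*y0 + vB) + (- tC*uA*uE + tE*uA*uC)*(tB*x1 - uB*y1 + vB) + (- tA*uB*uE + tB*uA*uE)*(tC*x1 - uC*y1 + vC) + (- tA*uB*uE + tE*uA*uB)*(tC*x2 - uC*y2 + vC) + (tB*uA*uC - tC*uA*uB)*(tE*x2 - uE*y2 + vE) + (- tA*uB*uC + tB*uA*uC)*(tE*x3 - uE*y3 + vE) + (- tC*uB*uE + tE*uB*uC)*(tA*x3 - uA*y3 + vA)"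
    unfolding alg_def beg_def by algebra
  have zx: "(- tB*tE*uC + tC*tE*uB)*(tA*x0 - uA*y0 + vA) + (tA*tC*uE - tC*tE*uA)*(tB*x0 - uB*y0 + vB) + (tA*tC*uE - tA*tE*uC)*(tB*x1 - uB*y1 + vB) + (tA*tE*uB - tB*tE*uA)*(tC*x1 - uC*y1 + vC) + (tA*tB*uE - tB*tE*uA)*(tC*x2 - uC*y2 + vC) + (- tA*tB*uC + tA*tC*uB)*(tE*x2 - uE*y2 + vE) + (tA*tC*uB - tB*tC*uA)*(tE*x3 - uE*y3 + vE) + (tB*tC*uE - tB*tE*uC)*(tA*x3 - uA*y3 + vA) = 0" unfolding e1 e2 e3 e4 e5 e6 e7 e8 by simp
  have zy: "(tB*uC*uE - tC*uB*uE)*(tA*x0 - uA*y0 + vA) + (- tA*uC*uE + tE*uA*uC)*(tB*x0 - uB*y0 + vB) + (- tC*uA*uE + tE*uA*uC)*(tB*x1 - uB*y1 + vB) + (- tA*uB*uE + tB*uA*uE)*(tC*x1 - uC*y1 + vC) + (- tA*uB*uE + tE*uA*uB)*(tC*x2 - uC*y2 + vC) + (tB*uA*uC - tC*uA*uB)*(tE*x2 - uE*y2 + vE) + (- tA*uB*uC + tB*uA*uC)*(tE*x3 - uE*y3 + vE) + (- tC*uB*uE + tE*uB*uC)*(tA*x3 - uA*y3 + vA) = 0" unfolding e1 e2 e3 e4 e5 e6 e7 e8 by simp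
  have cx0: "gag tA uA tB uB tC uC tE uE * (x0+x1+x2+x3) - beg tA uA tB uB tC uC tE uE * (y0+y1+y2+y3) - (tA*tB*uC*vE - tA*tB*uE*vC - 2*tA*tC*uB*vE - 2*tA*tC*uE*vB - tA*tE*uB*vC + tA*tE*uC*vB + tB*tC*uA*vE - tB*tC*uE*vA + 2*tB*tE*uA*vC + 2*tB*tE*uC*vA + tC*tE*uA*vB - tC*tE*uB*vA) = 0"
    by (rule trans[OF hx zx])
  have cy0: "alg tA uA tB uB tC uC tE uE * (y0+y1+y2+y3) - beg tA uA tB uB tC uC tE uE * (x0+x1+x2+x3) - (tA*uB*uC*vE + 2*tA*uB*uE*vC + tA*uC*uE*vB - 2*tB*uA*uC*vE - tB*uA*uE*vC - tB*uC*uE*vA + tC*uA*uB*vE + tC*uA*uE*vB + 2*tC*uB*uE*vA - tE*uA*uB*vC - 2*tE*uA*uC*vB - tE*uB*uC*vA) = 0"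
    by (rule trans[OF hy zy])
  have cx: "gag tA uA tB uB tC uC tE uE * (4*h) - beg tA uA tB uB tC uC tE uE * (4*k) - (tA*tB*uC*vE - tA*tB*uE*vC - 2*tA*tC*uB*vE - 2*tA*tC*uE*vB - tA*tE*uB*vC + tA*tE*uC*vB + tB*tC*uA*vE - tB*tC*uE*vA + 2*tB*tE*uA*vC + 2*tB*tE*uC*vA + tC*tE*uA*vB - tC*tE*uB*vA) = 0"
    using cx0 unfolding hh kk .
  have cy: "alg tA uA tB uB tC uC tE uE * (4*k) - beg tA uA tB uB tC uC tE uE * (4*h) - (tA*uB*uC*vE + 2*tA*uB*uE*vC + tA*uC*uE*vB - 2*tB*uA*uC*vE - tB*uA*uE*vC - tB*uC*uE*vA + tC*uA*uB*vE + tC*uA*uE*vB + 2*tC*uB*uE*vA - tE*uA*uB*vC - 2*tE*uA*uC*vB - tE*uB*uC*vA) = 0"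
    using cy0 unfolding hh kk .
  have big: "Dg tA uA vA tB uB vB tC uC vC tE uE vE x y + 2*Phg tA uA tB uB tC uC tE uE (x-h) (y-k)
       - (Dg tA uA vA tB uB vB tC uC vC tE uE vE a b + 2*Phg tA uA tB uB tC uC tE uE (a-h) (b-k))
     = (a-x) * (gag tA uA tB uB tC uC tE uE * (4*h) - beg tA uA tB uB tC uC tE uE * (4*k) - (tA*tB*uC*vE - tA*tB*uE*vC - 2*tA*tC*uB*vE - 2*tA*tC*uE*vB - tA*tE*uB*vC + tA*tE*uC*vB + tB*tC*uA*vE - tB*tC*uE*vA + 2*tB*tE*uA*vC + 2*tB*tE*uC*vA + tC*tE*uA*vB - tC*tE*uB*vA))
     + (b-y) * (alg tA uA tB uB tC uC tE uE * (4*k) - beg tA uA tB uB tC uC tE uE * (4*h) - (tA*uB*uC*vE + 2*tA*uB*uE*vC + tA*uC*uE*vB - 2*tB*uA*uC*vE - tB*uA*uE*vC - tB*uC*uE*vA + tC*uA*uB*vE + tC*uA*uE*vB + 2*tC*uB*uE*vA - tE*uA*uB*vC - 2*tE*uA*uC*vB - tE*uB*uC*vA))"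
    unfolding Dg_def Phg_def alg_def beg_def gag_def by algebra
  show ?thesis using big unfolding cx cy by simp
qed

lemma diag_core:
  fixes x0 y0 x1 y1 x2 y2 x3 y3 s :: "'a::field"
  shows "2 * ((x3-x1)*(y2-y0) - (y3-y1)*(x2-x0)) * Dg (-(y0-y3)) (-(x0-x3)) ((y0-y3)*x3-(x0-x3)*y3) (-(y1-y0)) (-(x1-x0)) ((y1-y0)*x0-(x1-x0)*y0) (-(y2-y1)) (-(x2-x1)) ((y2-y1)*x1-(x2-x1)*y1) (-(y3-y2)) (-(x3-x2)) ((y3-y2)*x2-(x3-x2)*y2) (x0+s*(x2-x0)) (y0+s*(y2-y0))
   = (- 8*x0*x1*x2*y0*y1*y3 + 4*x0*x1*x2*y0*y2^2 + 4*x0*x1*x2*y0*y3^2 + 4*x0*x1*x2*y0^2*y1 - 4*x0*x1*x2*y0^2*y2 + 8*x0*x1*x2*y1*y2*y3 - 4*x0*x1*x2*y1*y2^2 - 4*x0*x1*x2*y2*y3^2 + 8*x0*x1*x3*y0*y1*y2 - 8*x0*x1*x3*y0*y2*y3 - 4*x0*x1*x3*y0^2*y1 + 4*x0*x1*x3*y0^2*y3 - 4*x0*x1*x3*y1*y2^2 + 4*x0*x1*x3*y2^2*y3 + 4*x0*x1^2*y0*y2*y3 - 4*x0*x1^2*y0*y2^2 + 2*x0*x1^2*y0^2*y2 - 2*x0*x1^2*y0^2*y3 - 2*x0*x1^2*y2^2*y3 + 2*x0*x1^2*y2^3 + 8*x0*x2*x3*y0*y1*y3 - 4*x0*x2*x3*y0*y1^2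 - 4*x0*x2*x3*y0*y2^2 + 4*x0*x2*x3*y0^2*y2 - 4*x0*x2*x3*y0^2*y3 - 8*x0*x2*x3*y1*y2*y3 + 4*x0*x2*x3*y1^2*y2 + 4*x0*x2*x3*y2^2*y3 - 4*x0*x2^2*y0*y1*y2 + 4*x0*x2^2*y0*y1^2 + 4*x0*x2^2*y0*y2*y3 - 4*x0*x2^2*y0*y3^2 - 2*x0*x2^2*y0^2*y1 + 2*x0*x2^2*y0^2*y3 + 6*x0*x2^2*y1*y3^2 + 2*x0*x2^2*y1^2*y2 - 6*x0*x2^2*y1^2*y3 - 2*x0*x2^2*y2*y3^2 - 4*x0*x3^2*y0*y1*y2 + 4*x0*x3^2*y0*y2^2 + 2*x0*x3^2*y0^2*y1 - 2*x0*x3^2*y0^2*y2 + 2*x0*x3^2*y1*y2^2 - 2*x0*x3^2*y2^3 - 4*x0^2*x1*y0*y1*y2 + 4*x0^2*x1*y0*y1*y3 + 2*x0^2*x1*y0*y2^2 - 2*x0^2*x1*y0*y3^2 - 4*x0^2*x1*y1*y2*y3 + 4*x0^2*x1*y1*y2^2 + 2*x0^2*x1*y2*y3^2 - 2*x0^2*x1*y2^3 + 4*x0^2*x2*y0*y1*y2 - 2*x0^2*x2*y0*y1^2 - 4*x0^2*x2*y0*y2*y3 + 2*x0^2*x2*y0*y3^2 + 2*x0^2*x2*y1*y2^2 - 6*x0^2*x2*y1*y3^2 - 4*x0^2*x2*y1^2*y2 + 6*x0^2*x2*y1^2*y3 + 4*x0^2*x2*y2*y3^2 - 2*x0^2*x2*y2^2*y3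 - 4*x0^2*x3*y0*y1*y3 + 2*x0^2*x3*y0*y1^2 + 4*x0^2*x3*y0*y2*y3 - 2*x0^2*x3*y0*y2^2 + 4*x0^2*x3*y1*y2*y3 - 2*x0^2*x3*y1^2*y2 - 4*x0^2*x3*y2^2*y3 + 2*x0^2*x3*y2^3 - 2*x0^3*y1*y2^2 + 2*x0^3*y1*y3^2 + 2*x0^3*y1^2*y2 - 2*x0^3*y1^2*y3 - 2*x0^3*y2*y3^2 + 2*x0^3*y2^2*y3 - 8*x1*x2*x3*y0*y1*y2 + 8*x1*x2*x3*y0*y2*y3 + 4*x1*x2*x3*y0^2*y1 - 4*x1*x2*x3*y0^2*y3 + 4*x1*x2*x3*y1*y2^2 - 4*x1*x2*x3*y2^2*y3 + 4*x1*x2^2*y0*y1*y2 + 4*x1*x2^2*y0*y1*y3 - 2*x1*x2^2*y0*y3^2 - 4*x1*x2^2*y0^2*y1 - 2*x1*x2^2*y0^2*y2 + 2*x1*x2^2*y0^3 - 4*x1*x2^2*y1*y2*y3 + 2*x1*x2^2*y2*y3^2 - 6*x1*x3^2*y0*y2^2 + 6*x1*x3^2*y0^2*y2 - 2*x1*x3^2*y0^3 + 2*x1*x3^2*y2^3 - 4*x1^2*x2*y0*y2*y3 - 2*x1^2*x2*y0*y2^2 + 4*x1^2*x2*y0^2*y2 + 2*x1^2*x2*y0^2*y3 - 2*x1^2*x2*y0^3 + 2*x1^2*x2*y2^2*y3 + 6*x1^2*x3*y0*y2^2 - 6*x1^2*x3*y0^2*y2 + 2*x1^2*x3*y0^3 -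 2*x1^2*x3*y2^3 + 4*x2*x3^2*y0*y1*y2 + 2*x2*x3^2*y0*y2^2 - 2*x2*x3^2*y0^2*y1 - 4*x2*x3^2*y0^2*y2 + 2*x2*x3^2*y0^3 - 2*x2*x3^2*y1*y2^2 - 4*x2^2*x3*y0*y1*y3 + 2*x2^2*x3*y0*y1^2 - 4*x2^2*x3*y0*y2*y3 + 2*x2^2*x3*y0^2*y2 + 4*x2^2*x3*y0^2*y3 - 2*x2^2*x3*y0^3 + 4*x2^2*x3*y1*y2*y3 - 2*x2^2*x3*y1^2*y2 - 2*x2^3*y0*y1^2 + 2*x2^3*y0*y3^2 + 2*x2^3*y0^2*y1 - 2*x2^3*y0^2*y3 - 2*x2^3*y1*y3^2 + 2*x2^3*y1^2*y3) * (2*s-1) * ((x3-x1)*(y0+s*(y2-y0)-y1) - (y3-y1)*(x0+s*(x2-x0)-x1))"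
  unfolding Dg_def by algebra


section \<open>Basic line geometry\<close>

definition ev :: "('a::field) line \<Rightarrow> 'a point \<Rightarrow> 'a" where
  "ev L p = tL L * fst p - uL L * snd p + vL L"
definition dirf :: "('a::field) line \<Rightarrow> 'a \<Rightarrow> 'a \<Rightarrow> 'a" where
  "dirf L d1 d2 = tL L * d1 - uL L * d2"
definition fp :: "('a::field) line \<Rightarrow> 'a line \<Rightarrow> 'a point \<Rightarrow> 'a \<Rightarrow> 'a \<Rightarrow> 'a" where
  "fp L1 L2 p d1 d2 = ev L1 p * dirf L2 d1 d2 + ev L2 p * dirf L1 d1 d2"
definition DQ :: "('a::field) line \<Rightarrow> 'a line \<Rightarrow> 'a line \<Rightarrow> 'a line \<Rightarrow> 'a point \<Rightarrow> 'a" where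
  "DQ A B A' B' p = Dg (tL A) (uL A) (vL A) (tL B) (uL B) (vL B) (tL A') (uL A') (vL A')
      (tL B') (uL B') (vL B') (fst p) (snd p)"

lemma on_line_ev: "on_line L p \<longleftrightarrow> ev L p = 0"
  by (simp add: on_line_def ev_def)

lemma line_eqI: "tL L = tL M \<Longrightarrow> uL L = uL M \<Longrightarrow> vL L = vL M \<Longrightarrow> L = M"
  by (cases L; cases M) (simp add: tL_def uL_def vL_def)

lemma par_self: "parallel L L"
  by (simp add: parallel_def mult.commute)

lemma par_sym: "parallel L M \<longleftrightarrow> parallel M L"
  unfolding parallel_def by (metis mult.commute right_minus_eq)

lemma par_dirf: "parallel l M \<longleftrightarrow> dirf M (uL l) (tL l) = 0"
  unfolding parallel_def dirf_def by (metis mult.commute right_minus_eq)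

lemma par_eq: assumes "is_line L" "is_line M" "parallel L M"
  shows "tL L = tL M \<and> uL L = uL M"
  using assms by (auto simp: is_line_def parallel_def)

lemma par_trans: assumes "is_line L" "is_line M" "is_line N" "parallel L M" "parallel L N"
  shows "parallel M N"
  using par_eq[OF assms(1,2,4)] par_eq[OF assms(1,3,5)] by (simp add: parallel_def mult.commute)

lemma line_eq_par: assumes "is_line L" "is_line M" "parallel L M" "on_line L p" "on_line M p"
  shows "L = M"
proof -
  from par_eq[OF assms(1-3)] have t: "tL L = tL M" and u: "uL L = uL M" by auto
  have "vL L = vL M" using assms(4,5) t u unfolding on_line_def by algebra
  then show ?thesis using t u by (intro line_eqI)
qed

lemma two_points: assumes "is_line L" "is_line M" "on_line L p" "on_line L q" "on_line M p" "on_line M q" "p \<noteq> q"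
  shows "L = M"
proof -
  have "parallel L M"
  proof -
    have a: "tL L * (fst q - fst p) = uL L * (snd q - snd p)" using assms(3,4) unfolding on_line_def by algebra
    have b: "tL M * (fst q - fst p) = uL M * (snd q - snd p)" using assms(5,6) unfolding on_line_def by algebra
    have c1: "(tL L * uL M - uL L * tL M) * (fst q - fst p) = 0" using a b by algebra
    have c2: "(tL L * uL M - uL L * tL M) * (snd q - snd p) = 0" using a b by algebra
    have "fst q - fst p \<noteq> 0 \<or> snd q - snd p \<noteq> 0" using assms(7) by (cases p, cases q) auto
    then show ?thesis using c1 c2 unfolding parallel_def by auto
  qed
  then show ?thesis using line_eq_par assms by blast
qed

lemma pts_uniq: assumes "\<not> parallel L M" "on_line L p" "on_line M p" "on_line L q" "on_line M q"
  shows "p = q"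
proof -
  have c1: "(tL L * uL M - uL L * tL M) * (fst q - fst p) = 0" using assms(2-5) unfolding on_line_def by algebra
  have c2: "(tL L * uL M - uL L * tL M) * (snd q - snd p) = 0" using assms(2-5) unfolding on_line_def by algebra
  have "tL L * uL M - uL L * tL M \<noteq> 0" using assms(1) by (simp add: parallel_def)
  then have "fst q = fst p" "snd q = snd p" using c1 c2 by auto
  then show ?thesis by (simp add: prod_eq_iff)
qed

lemma div_lin: "(d::'a::field) \<noteq> 0 \<Longrightarrow> t * (a / d) - u * (b / d) + v = (t * a - u * b + v * d) / d"
  by (simp add: field_simps)

lemma meet_ex: assumes "\<not> parallel L M"
  shows "\<exists>p. on_line L p \<and> on_line M p"
proof -
  let ?d = "uL L * tL M - tL L * uL M"
  have d: "?d \<noteq> 0" using assms unfolding parallel_def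
    by (metis diff_0 eq_iff_diff_eq_0 minus_diff_eq)
  let ?p = "((vL L * uL M - uL L * vL M) / ?d, (tL M * vL L - tL L * vL M) / ?d)"
  have n1: "tL L * (vL L * uL M - uL L * vL M) - uL L * (tL M * vL L - tL L * vL M) + vL L * ?d = 0" by algebra
  have n2: "tL M * (vL L * uL M - uL L * vL M) - uL M * (tL M * vL L - tL L * vL M) + vL M * ?d = 0" by algebra
  have "on_line L ?p" unfolding on_line_def fst_conv snd_conv div_lin[OF d] using n1 by simp
  moreover have "on_line M ?p" unfolding on_line_def fst_conv snd_conv div_lin[OF d] using n2 by simp
  ultimately show ?thesis by blast
qed

lemma meet_on: assumes "\<not> parallel L M"
  shows "on_line L (meet L M)" "on_line M (meet L M)"
proof -
  obtain p where p: "on_line L p \<and> on_line M p" using meet_ex[OF assms] by blast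
  have "on_line L (meet L M) \<and> on_line M (meet L M)"
    unfolding meet_def by (rule theI[of _ p]) (use p pts_uniq[OF assms] in blast)+
  then show "on_line L (meet L M)" "on_line M (meet L M)" by auto
qed

lemma meet_eq: assumes "\<not> parallel L M" "on_line L p" "on_line M p"
  shows "meet L M = p"
  using pts_uniq[OF assms(1) meet_on[OF assms(1)] assms(2,3)] by simp

lemma midpoint_on: fixes l :: "'a::field line" assumes "on_line l p" "on_line l q" "(2::'a) \<noteq> 0"
  shows "on_line l ((fst p + fst q)/2, (snd p + snd q)/2)"
proof -
  define mx where "mx = (fst p + fst q)/2"
  define my where "my = (snd p + snd q)/2"
  have h1: "2 * mx = fst p + fst q" "2 * my = snd p + snd q"
    using assms(3) unfolding mx_def my_def by simp_all
  have "2 * (tL l * mx - uL l * my + vL l)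
     = (tL l * fst p - uL l * snd p + vL l) + (tL l * fst q - uL l * snd q + vL l)"
    using h1 by algebra
  moreover have "tL l * fst p - uL l * snd p + vL l = 0" "tL l * fst q - uL l * snd q + vL l = 0"
    using assms(1,2) unfolding on_line_def by auto
  ultimately have "2 * (tL l * mx - uL l * my + vL l) = 0" by simp
  then have "tL l * mx - uL l * my + vL l = 0" using assms(3) by (metis mult_eq_0_iff)
  then show ?thesis unfolding on_line_def mx_def my_def by simp
qed

lemma dir_param: assumes "is_line l" "on_line l p" "on_line l q"
  shows "\<exists>\<sigma>. fst q = fst p + \<sigma> * uL l \<and> snd q = snd p + \<sigma> * tL l"
proof (cases "uL l = 0")
  case True
  then have t: "tL l = 1" using assms(1) by (simp add: is_line_def)
  have "fst q = fst p" using assms(2,3) True t unfolding on_line_def by algebra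
  then show ?thesis using True t by (intro exI[of _ "snd q - snd p"]) simp
next
  case False
  then have u: "uL l = 1" using assms(1) by (simp add: is_line_def)
  have "snd q = snd p + (fst q - fst p) * tL l" using assms(2,3) u unfolding on_line_def by algebra
  then show ?thesis using u by (intro exI[of _ "fst q - fst p"]) simp
qed

section \<open>Midpoints and the forms fp\<close>

lemma mid_zero: fixes l L1 L2 :: "'a::field line" assumes two: "(2::'a::field) \<noteq> 0" and l: "is_line l" and on: "on_line l p" "on_line l q"
    "on_line L1 p" "on_line L2 q"
  shows "fp L1 L2 ((fst p + fst q)/2, (snd p + snd q)/2) (uL l) (tL l) = 0"
proof -
  obtain \<sigma> where s: "fst q = fst p + \<sigma> * uL l" "snd q = snd p + \<sigma> * tL l"
    using dir_param[OF l on(1,2)] by blast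
  have e1: "tL L1 * fst p - uL L1 * snd p + vL L1 = 0" using on(3) by (simp add: on_line_def)
  have e2: "tL L2 * fst q - uL L2 * snd q + vL L2 = 0" using on(4) by (simp add: on_line_def)
  have x: "(fst p + fst q)/2 = fst p + (\<sigma>/2) * uL l" using s two by (simp add: field_simps)
  have y: "(snd p + snd q)/2 = snd p + (\<sigma>/2) * tL l" using s two by (simp add: field_simps)
  have x2: "(fst p + fst q)/2 = fst q - (\<sigma>/2) * uL l" using s two by (simp add: field_simps)
  have y2: "(snd p + snd q)/2 = snd q - (\<sigma>/2) * tL l" using s two by (simp add: field_simps)
  have E1: "ev L1 ((fst p + fst q)/2, (snd p + snd q)/2) = (\<sigma>/2) * dirf L1 (uL l) (tL l)"
    unfolding ev_def dirf_def fst_conv snd_conv x y using e1 by algebra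
  have E2: "ev L2 ((fst p + fst q)/2, (snd p + snd q)/2) = - (\<sigma>/2) * dirf L2 (uL l) (tL l)"
    unfolding ev_def dirf_def fst_conv snd_conv x2 y2 using e2 by algebra
  show ?thesis unfolding fp_def E1 E2 by (simp add: algebra_simps)
qed

lemma zero_mid: fixes l L1 L2 :: "'a::field line" assumes two: "(2::'a::field) \<noteq> 0" and l: "is_line l" and P: "on_line l P"
  and f: "fp L1 L2 P (uL l) (tL l) = 0" and n1: "\<not> parallel l L1" and n2: "\<not> parallel l L2"
  shows "mid_pair L1 L2 l = Aff P"
proof -
  define c1 where "c1 = dirf L1 (uL l) (tL l)"
  define c2 where "c2 = dirf L2 (uL l) (tL l)"
  have c1: "c1 \<noteq> 0" using n1 unfolding c1_def par_dirf by simp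
  have c2: "c2 \<noteq> 0" using n2 unfolding c2_def par_dirf by simp
  define s1 where "s1 = - ev L1 P / c1"
  define s2 where "s2 = - ev L2 P / c2"
  define p1 where "p1 = (fst P + s1 * uL l, snd P + s1 * tL l)"
  define p2 where "p2 = (fst P + s2 * uL l, snd P + s2 * tL l)"
  have eP: "tL l * fst P - uL l * snd P + vL l = 0" using P by (simp add: on_line_def)
  have "on_line l p1" unfolding on_line_def p1_def fst_conv snd_conv using eP by algebra
  moreover have "on_line L1 p1"
  proof -
    have "s1 * c1 = - ev L1 P" unfolding s1_def using c1 by simp
    then show ?thesis unfolding on_line_def p1_def fst_conv snd_conv
      using c1_def unfolding ev_def dirf_def by algebra
  qed
  ultimately have m1: "meet l L1 = p1" using meet_eq n1 by blast
  have "on_line l p2" unfolding on_line_def p2_def fst_conv snd_conv using eP by algebra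
  moreover have "on_line L2 p2"
  proof -
    have "s2 * c2 = - ev L2 P" unfolding s2_def using c2 by simp
    then show ?thesis unfolding on_line_def p2_def fst_conv snd_conv
      using c2_def unfolding ev_def dirf_def by algebra
  qed
  ultimately have m2: "meet l L2 = p2" using meet_eq n2 by blast
  have "s1 + s2 = - fp L1 L2 P (uL l) (tL l) / (c1 * c2)"
    unfolding s1_def s2_def fp_def c1_def[symmetric] c2_def[symmetric] using c1 c2
    by (simp add: field_simps)
  then have ss: "s1 + s2 = 0" using f by simp
  have a1: "fst p1 + fst p2 = 2 * fst P + (s1 + s2) * uL l" unfolding p1_def p2_def by (simp add: algebra_simps)
  have a2: "snd p1 + snd p2 = 2 * snd P + (s1 + s2) * tL l" unfolding p1_def p2_def by (simp add: algebra_simps)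
  have "(fst p1 + fst p2)/2 = fst P" "(snd p1 + snd p2)/2 = snd P"
    unfolding a1 a2 ss using two by simp_all
  then show ?thesis using n1 n2 m1 m2 by (simp add: mid_pair_def Let_def prod_eq_iff)
qed

lemma noncross: assumes "on_line l P" "\<not> crosses l L1 L2"
  shows "fp L1 L2 P (uL l) (tL l) = 0"
proof -
  have "l = L1 \<or> l = L2 \<or> (parallel l L1 \<and> parallel l L2)" using assms(2) by (auto simp: crosses_def)
  moreover
  { assume "l = L1"
    then have "fp L1 L2 P (uL l) (tL l) = 0" using assms(1)
      unfolding fp_def on_line_ev dirf_def by (simp add: mult.commute) }
  moreover
  { assume "l = L2"
    then have "fp L1 L2 P (uL l) (tL l) = 0" using assms(1)
      unfolding fp_def on_line_ev dirf_def by (simp add: mult.commute) }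
  moreover
  { assume "parallel l L1 \<and> parallel l L2"
    then have "fp L1 L2 P (uL l) (tL l) = 0" unfolding fp_def par_dirf by simp }
  ultimately show ?thesis by blast
qed


section \<open>Bisectors\<close>

lemma half:
  fixes l L1 L2 M1 M2 :: "'a::field line"
  assumes two: "(2::'a) \<noteq> 0" and l: "is_line l"
    and ls: "is_line L1" "is_line L2" "is_line M1" "is_line M2"
    and np: "\<not> parallel L1 M1" "\<not> parallel L1 M2" "\<not> parallel L2 M1" "\<not> parallel L2 M2"
    and cr: "crosses l L1 L2"
    and bis: "crosses l M1 M2 \<longrightarrow> mid_pair L1 L2 l = mid_pair M1 M2 l"
  shows "\<exists>P. mid_pair L1 L2 l = Aff P \<and> fp L1 L2 P (uL l) (tL l) = 0 \<and> fp M1 M2 P (uL l) (tL l) = 0"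
proof (cases "parallel l L1 \<or> parallel l L2")
  case True
  have nm1: "\<not> parallel l M1"
  proof
    assume h: "parallel l M1"
    from True show False
    proof
      assume "parallel l L1" then show False using par_trans[OF l ls(1) ls(3)] h np(1) by blast
    next
      assume "parallel l L2" then show False using par_trans[OF l ls(2) ls(3)] h np(3) by blast
    qed
  qed
  have nm2: "\<not> parallel l M2"
  proof
    assume h: "parallel l M2"
    from True show False
    proof
      assume "parallel l L1" then show False using par_trans[OF l ls(1) ls(4)] h np(2) by blast
    next
      assume "parallel l L2" then show False using par_trans[OF l ls(2) ls(4)] h np(4) by blast
    qed
  qed
  have "l \<noteq> M1" using nm1 par_self by metis
  moreover have "l \<noteq> M2" using nm2 par_self by metis
  ultimately have "crosses l M1 M2" using nm1 nm2 by (simp add: crosses_def)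
  then have "mid_pair L1 L2 l = mid_pair M1 M2 l" using bis by simp
  moreover have "mid_pair L1 L2 l = inf_pt l" using True by (simp add: mid_pair_def)
  moreover have "\<exists>P. mid_pair M1 M2 l = Aff P" by (rule exI) (simp add: mid_pair_def Let_def nm1 nm2)
  ultimately show ?thesis by (auto simp: inf_pt_def)
next
  case False
  define P where "P = ((fst (meet l L1) + fst (meet l L2))/2, (snd (meet l L1) + snd (meet l L2))/2)"
  have mp: "mid_pair L1 L2 l = Aff P" using False by (simp add: mid_pair_def P_def Let_def)
  have n1: "\<not> parallel l L1" and n2: "\<not> parallel l L2" using False by auto
  have f1: "fp L1 L2 P (uL l) (tL l) = 0"
    unfolding P_def by (rule mid_zero[OF two l meet_on(1)[OF n1] meet_on(1)[OF n2] meet_on(2)[OF n1] meet_on(2)[OF n2]])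
  have f2: "fp M1 M2 P (uL l) (tL l) = 0"
  proof (cases "crosses l M1 M2")
    case True
    then have mq: "mid_pair M1 M2 l = Aff P" using bis mp by simp
    then have nM: "\<not> (parallel l M1 \<or> parallel l M2)" by (auto simp: mid_pair_def inf_pt_def)
    then have m1: "\<not> parallel l M1" and m2: "\<not> parallel l M2" by auto
    have "P = ((fst (meet l M1) + fst (meet l M2))/2, (snd (meet l M1) + snd (meet l M2))/2)"
      using mq nM by (simp add: mid_pair_def Let_def)
    then show ?thesis
      using mid_zero[OF two l meet_on(1)[OF m1] meet_on(1)[OF m2] meet_on(2)[OF m1] meet_on(2)[OF m2]] by simp
  next
    case False
    have "on_line l P" unfolding P_def by (rule midpoint_on[OF meet_on(1)[OF n1] meet_on(1)[OF n2] two])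
    then show ?thesis using noncross False by blast
  qed
  show ?thesis using mp f1 f2 by blast
qed

lemma crosses_some:
  assumes q: "quadrilateral A B A' B'" and l: "is_line l"
  shows "crosses l A A' \<or> crosses l B B'"
proof (rule ccontr)
  assume "\<not> (crosses l A A' \<or> crosses l B B')"
  then have c1: "parallel l A \<or> parallel l A'" and c2: "parallel l B \<or> parallel l B'"
    unfolding crosses_def using par_self by metis+
  have ls: "is_line A" "is_line B" "is_line A'" "is_line B'" and
    np: "\<not> parallel A B" "\<not> parallel B A'" "\<not> parallel A' B'" "\<not> parallel B' A"
    using q unfolding quadrilateral_def by auto
  have np2: "\<not> parallel A' B" "\<not> parallel A B'" using np par_sym by blast+
  from c1 c2 show False
    using par_trans[OF l ls(1) ls(2)] par_trans[OF l ls(1) ls(4)] par_trans[OF l ls(3) ls(2)]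
      par_trans[OF l ls(3) ls(4)] np np2 by blast
qed

lemma det_kernel:
  fixes a1 a2 b1 b2 :: "'a::field"
  assumes h: "a1*b2 - a2*b1 = 0"
  shows "\<exists>d1 d2. \<not>(d1 = 0 \<and> d2 = 0) \<and> a1*d1 + a2*d2 = 0 \<and> b1*d1 + b2*d2 = 0"
proof (cases "a1 = 0 \<and> a2 = 0")
  case True
  show ?thesis
  proof (cases "b1 = 0 \<and> b2 = 0")
    case True2: True
    then show ?thesis using True by (intro exI[of _ 1] exI[of _ 0]) simp
  next
    case False
    have "b1*b2 + b2*(-b1) = 0" by algebra
    then show ?thesis using True False by (intro exI[of _ b2] exI[of _ "-b1"]) auto
  qed
next
  case False
  have "a1*a2 + a2*(-a1) = 0" by algebra
  moreover have "b1*a2 + b2*(-a1) = 0" using h by algebra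
  ultimately show ?thesis using False by (intro exI[of _ a2] exI[of _ "-a1"]) auto
qed

lemma det_kernel2:
  fixes a1 a2 b1 b2 d1 d2 :: "'a::field"
  assumes "\<not>(d1 = 0 \<and> d2 = 0)" "a1*d1 + a2*d2 = 0" "b1*d1 + b2*d2 = 0"
  shows "a1*b2 - a2*b1 = 0"
proof -
  have "(a1*b2 - a2*b1) * d1 = 0" using assms(2,3) by algebra
  moreover have "(a1*b2 - a2*b1) * d2 = 0" using assms(2,3) by algebra
  ultimately show ?thesis using assms(1) by auto
qed

lemma DQ_alt: "DQ A B A' B' p =
   (ev A p * tL A' + ev A' p * tL A) * (-(ev B p * uL B' + ev B' p * uL B))
 - (-(ev A p * uL A' + ev A' p * uL A)) * (ev B p * tL B' + ev B' p * tL B)"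
  unfolding DQ_def Dg_def ev_def by simp

lemma fp_alt: "fp L1 L2 p d1 d2 = (ev L1 p * tL L2 + ev L2 p * tL L1) * d1 + (-(ev L1 p * uL L2 + ev L2 p * uL L1)) * d2"
  unfolding fp_def dirf_def by algebra

lemma DQ_zero_of_fp:
  assumes "\<not>(d1 = 0 \<and> d2 = 0)" "fp A A' p d1 d2 = 0" "fp B B' p d1 d2 = 0"
  shows "DQ A B A' B' p = 0"
  unfolding DQ_alt using det_kernel2[OF assms(1) assms(2)[unfolded fp_alt] assms(3)[unfolded fp_alt]] .

lemma fp_of_DQ:
  assumes "DQ A B A' B' p = 0"
  shows "\<exists>d1 d2. \<not>(d1 = 0 \<and> d2 = 0) \<and> fp A A' p d1 d2 = 0 \<and> fp B B' p d1 d2 = 0"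
  unfolding fp_alt using det_kernel[OF assms[unfolded DQ_alt]] .

lemma fp_scale: "fp L1 L2 p (c*d1) (c*d2) = c * fp L1 L2 p d1 d2"
  unfolding fp_def dirf_def by algebra

lemma zero_mid2:
  fixes l L1 L2 :: "'a::field line"
  assumes two: "(2::'a) \<noteq> 0" and l: "is_line l" and ls: "is_line L1" "is_line L2"
    and P: "on_line l P" and f: "fp L1 L2 P (uL l) (tL l) = 0" and cr: "crosses l L1 L2"
  shows "mid_pair L1 L2 l = Aff P"
proof -
  have n1: "\<not> parallel l L1"
  proof
    assume p1: "parallel l L1"
    then have d1: "dirf L1 (uL l) (tL l) = 0" by (simp add: par_dirf)
    have "\<not> parallel l L2" using cr p1 by (auto simp: crosses_def)
    then have d2: "dirf L2 (uL l) (tL l) \<noteq> 0" by (simp add: par_dirf)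
    have "ev L1 P * dirf L2 (uL l) (tL l) = 0" using f d1 unfolding fp_def by simp
    then have "on_line L1 P" using d2 by (simp add: on_line_ev)
    then have "l = L1" using line_eq_par[OF l ls(1) p1 P] by simp
    then show False using cr by (simp add: crosses_def)
  qed
  have n2: "\<not> parallel l L2"
  proof
    assume p2: "parallel l L2"
    then have d2: "dirf L2 (uL l) (tL l) = 0" by (simp add: par_dirf)
    have "\<not> parallel l L1" using cr p2 by (auto simp: crosses_def)
    then have d1: "dirf L1 (uL l) (tL l) \<noteq> 0" by (simp add: par_dirf)
    have "ev L2 P * dirf L1 (uL l) (tL l) = 0" using f d2 unfolding fp_def by simp
    then have "on_line L2 P" using d1 by (simp add: on_line_ev)
    then have "l = L2" using line_eq_par[OF l ls(2) p2 P] by simp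
    then show False using cr by (simp add: crosses_def)
  qed
  show ?thesis by (rule zero_mid[OF two l P f n1 n2])
qed

lemma bisect_from:
  fixes A B A' B' :: "'a::field line"
  assumes two: "(2::'a) \<noteq> 0" and q: "quadrilateral A B A' B'" and D: "DQ A B A' B' P = 0"
  shows "Aff P \<in> bisector_locus A B A' B'"
proof -
  have ls: "is_line A" "is_line B" "is_line A'" "is_line B'" using q unfolding quadrilateral_def by auto
  obtain d1 d2 where nz: "\<not>(d1 = 0 \<and> d2 = 0)" and f: "fp A A' P d1 d2 = 0" "fp B B' P d1 d2 = 0"
    using fp_of_DQ[OF D] by blast
  obtain l where l: "is_line l" "on_line l P" "fp A A' P (uL l) (tL l) = 0" "fp B B' P (uL l) (tL l) = 0"
  proof (cases "d1 = 0")
    case True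
    then have d2: "d2 \<noteq> 0" using nz by simp
    let ?l = "(1::'a, 0::'a, - fst P)"
    have "uL ?l = (1/d2) * d1" "tL ?l = (1/d2) * d2" using True d2 by (simp_all add: uL_def tL_def)
    then have "fp A A' P (uL ?l) (tL ?l) = 0" "fp B B' P (uL ?l) (tL ?l) = 0"
      using f by (simp_all only: fp_scale) simp_all
    moreover have "is_line ?l" by (simp add: is_line_def uL_def tL_def)
    moreover have "on_line ?l P" by (simp add: on_line_def uL_def tL_def vL_def)
    ultimately show ?thesis using that by blast
  next
    case False
    let ?l = "(d2/d1, 1::'a, - (d2/d1 * fst P - snd P))"
    have "uL ?l = (1/d1) * d1" "tL ?l = (1/d1) * d2" using False by (simp_all add: uL_def tL_def)
    then have "fp A A' P (uL ?l) (tL ?l) = 0" "fp B B' P (uL ?l) (tL ?l) = 0"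
      using f by (simp_all only: fp_scale) simp_all
    moreover have "is_line ?l" by (simp add: is_line_def uL_def tL_def)
    moreover have "on_line ?l P" by (simp add: on_line_def uL_def tL_def vL_def)
    ultimately show ?thesis using that by blast
  qed
  have mA: "crosses l A A' \<Longrightarrow> mid_pair A A' l = Aff P" using zero_mid2[OF two l(1) ls(1) ls(3) l(2) l(3)] .
  have mB: "crosses l B B' \<Longrightarrow> mid_pair B B' l = Aff P" using zero_mid2[OF two l(1) ls(2) ls(4) l(2) l(4)] .
  have "bisector_mid A B A' B' l (Aff P)"
    unfolding bisector_mid_def bisects_def using l(1) mA mB crosses_some[OF q l(1)] by auto
  then show ?thesis unfolding bisector_locus_def by blast
qed

lemma locus_DQ:
  fixes A B A' B' :: "'a::field line"
  assumes two: "(2::'a) \<noteq> 0" and q: "quadrilateral A B A' B'" and Pt: "Pt \<in> bisector_locus A B A' B'"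
  shows "\<exists>P. Pt = Aff P \<and> DQ A B A' B' P = 0"
proof -
  have ls: "is_line A" "is_line B" "is_line A'" "is_line B'" and
    np: "\<not> parallel A B" "\<not> parallel B A'" "\<not> parallel A' B'" "\<not> parallel B' A"
    using q unfolding quadrilateral_def by auto
  have np2: "\<not> parallel A' B" "\<not> parallel A B'" "\<not> parallel B A" "\<not> parallel B' A'" using np par_sym by blast+
  obtain l where bm: "bisector_mid A B A' B' l Pt" using Pt unfolding bisector_locus_def by blast
  then have l: "is_line l" and bis: "crosses l A A' \<and> crosses l B B' \<longrightarrow> mid_pair A A' l = mid_pair B B' l"
    unfolding bisector_mid_def bisects_def by auto
  have nzd: "\<not> (uL l = 0 \<and> tL l = 0)" using l by (auto simp: is_line_def)
  from bm have "(crosses l A A' \<and> Pt = mid_pair A A' l) \<or> (crosses l B B' \<and> Pt = mid_pair B B' l)"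
    unfolding bisector_mid_def by blast
  then obtain P where P: "Pt = Aff P" "fp A A' P (uL l) (tL l) = 0" "fp B B' P (uL l) (tL l) = 0"
  proof
    assume h: "crosses l A A' \<and> Pt = mid_pair A A' l"
    have "\<exists>P. mid_pair A A' l = Aff P \<and> fp A A' P (uL l) (tL l) = 0 \<and> fp B B' P (uL l) (tL l) = 0"
      by (rule half[OF two l ls(1) ls(3) ls(2) ls(4) np(1) np2(2) np2(1) np(3)]) (use h bis in auto)
    then show ?thesis using h that by auto
  next
    assume h: "crosses l B B' \<and> Pt = mid_pair B B' l"
    have "\<exists>P. mid_pair B B' l = Aff P \<and> fp B B' P (uL l) (tL l) = 0 \<and> fp A A' P (uL l) (tL l) = 0"
      by (rule half[OF two l ls(2) ls(4) ls(1) ls(3) np2(3) np(2) np(4) np2(4)]) (use h bis in auto)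
    then show ?thesis using h that by auto
  qed
  then show ?thesis using DQ_zero_of_fp[OF nzd P(2,3)] by blast
qed


section \<open>Diagonal points lie on the conic\<close>

lemma olt_sym: "on_line_thru q p r = on_line_thru p q r"
proof -
  have "(fst p - fst q) * (snd r - snd q) - (snd p - snd q) * (fst r - fst q)
      = - ((fst q - fst p) * (snd r - snd p) - (snd q - snd p) * (fst r - fst p))" (is "?l = _") by algebra
  then show ?thesis unfolding on_line_thru_def by (simp only: neg_equal_0_iff_equal)
qed

lemma collinear_on:
  assumes "on_line L p" "on_line L q" "p \<noteq> q" "on_line_thru p q r"
  shows "on_line L r"
proof -
  have a: "tL L * (fst q - fst p) = uL L * (snd q - snd p)" using assms(1,2) unfolding on_line_def by algebra
  have h: "(fst q - fst p) * (snd r - snd p) - (snd q - snd p) * (fst r - fst p) = 0"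
    using assms(4) unfolding on_line_thru_def .
  let ?w = "tL L * (fst r - fst p) - uL L * (snd r - snd p)"
  have w1: "?w * (fst q - fst p) = 0" using a h by algebra
  have w2: "?w * (snd q - snd p) = 0" using a h by algebra
  have "fst q - fst p \<noteq> 0 \<or> snd q - snd p \<noteq> 0" using assms(3) by (cases p, cases q) auto
  then have "?w = 0" using w1 w2 by auto
  then show ?thesis using assms(1) unfolding on_line_def by algebra
qed

lemma line_rep:
  assumes l: "is_line L" and on: "on_line L p" "on_line L q" and ne: "p \<noteq> q"
  shows "\<exists>c. c \<noteq> 0 \<and> tL L = c*(-(snd q - snd p)) \<and> uL L = c*(-(fst q - fst p))
             \<and> vL L = c*((snd q - snd p)*fst p - (fst q - fst p)*snd p)"
proof -
  have a: "tL L * (fst q - fst p) = uL L * (snd q - snd p)" using on unfolding on_line_def by algebra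
  have vp: "vL L = - (tL L * fst p - uL L * snd p)" using on(1) unfolding on_line_def by algebra
  show ?thesis
  proof (cases "fst q = fst p")
    case True
    then have e2: "snd q - snd p \<noteq> 0" using ne by (cases p, cases q) auto
    have u0: "uL L = 0" using a True e2 by simp
    then have t1: "tL L = 1" using l by (simp add: is_line_def)
    define c where "c = -1/(snd q - snd p)"
    have c: "c * (snd q - snd p) = -1" using e2 unfolding c_def by simp
    have "c \<noteq> 0" using c by auto
    moreover have "tL L = c*(-(snd q - snd p))" using c t1 by algebra
    moreover have "uL L = c*(-(fst q - fst p))" using True u0 by simp
    moreover have "vL L = c*((snd q - snd p)*fst p - (fst q - fst p)*snd p)"
      using c t1 u0 vp True by algebra
    ultimately show ?thesis by blast
  next
    case False
    then have e1: "fst q - fst p \<noteq> 0" by simp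
    have u: "uL L \<noteq> 0"
    proof
      assume "uL L = 0"
      then have "tL L = 0" using a e1 by simp
      then show False using l \<open>uL L = 0\<close> by (simp add: is_line_def)
    qed
    define c where "c = - uL L/(fst q - fst p)"
    have c: "c * (fst q - fst p) = - uL L" using e1 unfolding c_def by simp
    have "c \<noteq> 0" using c u by auto
    moreover have "tL L * (fst q - fst p) = c*(-(snd q - snd p)) * (fst q - fst p)" using c a by algebra
    then have "tL L = c*(-(snd q - snd p))" using e1 by simp
    moreover have "uL L = c*(-(fst q - fst p))" using c by algebra
    moreover have "vL L * (fst q - fst p) = c*((snd q - snd p)*fst p - (fst q - fst p)*snd p) * (fst q - fst p)"
      using c a vp by algebra
    then have "vL L = c*((snd q - snd p)*fst p - (fst q - fst p)*snd p)" using e1 by simp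
    ultimately show ?thesis by blast
  qed
qed

lemma param_line:
  assumes ne: "p \<noteq> q" and h: "on_line_thru p q r"
  shows "\<exists>s. fst r = fst p + s*(fst q - fst p) \<and> snd r = snd p + s*(snd q - snd p)"
proof -
  have h': "(fst q - fst p) * (snd r - snd p) = (snd q - snd p) * (fst r - fst p)"
    using h unfolding on_line_thru_def by algebra
  show ?thesis
  proof (cases "fst q = fst p")
    case True
    then have e2: "snd q - snd p \<noteq> 0" using ne by (cases p, cases q) auto
    have "fst r = fst p" using h' True e2 by simp
    moreover have "snd r = snd p + ((snd r - snd p)/(snd q - snd p))*(snd q - snd p)" using e2 by simp
    ultimately show ?thesis using True by (intro exI[of _ "(snd r - snd p)/(snd q - snd p)"]) simp
  next
    case False
    then have e1: "fst q - fst p \<noteq> 0" by simp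
    define s where "s = (fst r - fst p)/(fst q - fst p)"
    have s1: "s * (fst q - fst p) = fst r - fst p" using e1 unfolding s_def by simp
    have "(snd r - snd p) * (fst q - fst p) = s*(snd q - snd p) * (fst q - fst p)" using s1 h' by algebra
    then have "snd r - snd p = s*(snd q - snd p)" using e1 by simp
    then show ?thesis using s1 by (intro exI[of _ s]) algebra
  qed
qed

lemma quad_rot: "quadrilateral A B A' B' \<Longrightarrow> quadrilateral B A' B' A"
  unfolding quadrilateral_def by auto

lemma improper_O:
  fixes L1 L2 L3 L4 :: "'a::field line"
  assumes q: "quadrilateral L1 L2 L3 L4" and eq: "meet L1 L2 = meet L2 L3"
    and d1: "on_line_thru (meet L1 L2) (meet L3 L4) Z" and d2: "on_line_thru (meet L2 L3) (meet L4 L1) Z"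
  shows "Z = meet L1 L2"
proof -
  have ls: "is_line L1" "is_line L2" "is_line L3" "is_line L4"
    and np: "\<not> parallel L1 L2" "\<not> parallel L2 L3" "\<not> parallel L3 L4" "\<not> parallel L4 L1"
    and dist: "distinct [L1, L2, L3, L4]"
    and nc: "\<not> (\<exists>p. on_line L1 p \<and> on_line L2 p \<and> on_line L3 p \<and> on_line L4 p)"
    using q unfolding quadrilateral_def by auto
  define W0 where "W0 = meet L1 L2"
  define W2 where "W2 = meet L3 L4"
  define W3 where "W3 = meet L4 L1"
  have o0: "on_line L1 W0" "on_line L2 W0" "on_line L3 W0"
    using meet_on[OF np(1)] meet_on(2)[OF np(2)] eq unfolding W0_def by auto
  have o2: "on_line L3 W2" "on_line L4 W2" using meet_on[OF np(3)] unfolding W2_def by auto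
  have o3: "on_line L4 W3" "on_line L1 W3" using meet_on[OF np(4)] unfolding W3_def by auto
  have n02: "W0 \<noteq> W2" using nc o0 o2 by metis
  have n23: "W2 \<noteq> W3"
  proof
    assume "W2 = W3"
    then have "on_line L1 W2" using o3 by simp
    have "L1 = L3" using two_points[OF ls(1) ls(3) o0(1) \<open>on_line L1 W2\<close> o0(3) o2(1) n02] .
    then show False using dist by simp
  qed
  show ?thesis
  proof (rule ccontr)
    assume nO: "Z \<noteq> meet L1 L2"
    have c1: "(fst W2 - fst W0)*(snd Z - snd W0) - (snd W2 - snd W0)*(fst Z - fst W0) = 0"
      using d1 unfolding on_line_thru_def W0_def W2_def .
    have c2: "(fst W3 - fst W0)*(snd Z - snd W0) - (snd W3 - snd W0)*(fst Z - fst W0) = 0"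
      using d2 unfolding on_line_thru_def W0_def W3_def eq .
    let ?k = "(fst W2 - fst W0)*(snd W3 - snd W0) - (snd W2 - snd W0)*(fst W3 - fst W0)"
    have k1: "?k * (fst Z - fst W0) = 0" using c1 c2 by algebra
    have k2: "?k * (snd Z - snd W0) = 0" using c1 c2 by algebra
    have "fst Z - fst W0 \<noteq> 0 \<or> snd Z - snd W0 \<noteq> 0" using nO unfolding W0_def[symmetric]
      by (cases Z, cases W0) auto
    then have k: "?k = 0" using k1 k2 by auto
    have "on_line_thru W2 W3 W0" unfolding on_line_thru_def using k by algebra
    then have "on_line L4 W0" using collinear_on[OF o2(2) o3(1) n23] by blast
    then show False using nc o0 by blast
  qed
qed

lemma proper_diag:
  fixes A B A' B' :: "'a::field line"
  assumes two: "(2::'a) \<noteq> 0" and q: "quadrilateral A B A' B'"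
    and n01: "meet A B \<noteq> meet B A'" and n12: "meet B A' \<noteq> meet A' B'"
    and n23: "meet A' B' \<noteq> meet B' A" and n30: "meet B' A \<noteq> meet A B"
    and d1: "on_line_thru (meet A B) (meet A' B') Z" and d2: "on_line_thru (meet B A') (meet B' A) Z"
  shows "DQ A B A' B' Z = 0"
proof -
  have ls: "is_line A" "is_line B" "is_line A'" "is_line B'"
    and np: "\<not> parallel A B" "\<not> parallel B A'" "\<not> parallel A' B'" "\<not> parallel B' A"
    and nc: "\<not> (\<exists>p. on_line A p \<and> on_line B p \<and> on_line A' p \<and> on_line B' p)"
    using q unfolding quadrilateral_def by auto
  obtain x0 y0 where V0: "meet A B = (x0, y0)" by (cases "meet A B") auto
  obtain x1 y1 where V1: "meet B A' = (x1, y1)" by (cases "meet B A'") auto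
  obtain x2 y2 where V2: "meet A' B' = (x2, y2)" by (cases "meet A' B'") auto
  obtain x3 y3 where V3: "meet B' A = (x3, y3)" by (cases "meet B' A") auto
  have o0: "on_line A (x0,y0)" "on_line B (x0,y0)" using meet_on[OF np(1)] V0 by auto
  have o1: "on_line B (x1,y1)" "on_line A' (x1,y1)" using meet_on[OF np(2)] V1 by auto
  have o2: "on_line A' (x2,y2)" "on_line B' (x2,y2)" using meet_on[OF np(3)] V2 by auto
  have o3: "on_line B' (x3,y3)" "on_line A (x3,y3)" using meet_on[OF np(4)] V3 by auto
  have m30: "(x3,y3) \<noteq> (x0,y0)" using n30 V0 V3 by simp
  have m01: "(x0,y0) \<noteq> (x1,y1)" using n01 V0 V1 by simp
  have m12: "(x1,y1) \<noteq> (x2,y2)" using n12 V1 V2 by simp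
  have m23: "(x2,y2) \<noteq> (x3,y3)" using n23 V2 V3 by simp
  obtain cA where cA: "cA \<noteq> 0" "tL A = cA*(-(y0-y3))" "uL A = cA*(-(x0-x3))" "vL A = cA*((y0-y3)*x3-(x0-x3)*y3)"
    using line_rep[OF ls(1) o3(2) o0(1) m30] by auto
  obtain cB where cB: "cB \<noteq> 0" "tL B = cB*(-(y1-y0))" "uL B = cB*(-(x1-x0))" "vL B = cB*((y1-y0)*x0-(x1-x0)*y0)"
    using line_rep[OF ls(2) o0(2) o1(1) m01] by auto
  obtain cC where cC: "cC \<noteq> 0" "tL A' = cC*(-(y2-y1))" "uL A' = cC*(-(x2-x1))" "vL A' = cC*((y2-y1)*x1-(x2-x1)*y1)"
    using line_rep[OF ls(3) o1(2) o2(1) m12] by auto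
  obtain cE where cE: "cE \<noteq> 0" "tL B' = cE*(-(y3-y2))" "uL B' = cE*(-(x3-x2))" "vL B' = cE*((y3-y2)*x2-(x3-x2)*y2)"
    using line_rep[OF ls(4) o2(2) o3(1) m23] by auto
  have m02: "(x0,y0) \<noteq> (x2,y2)"
  proof
    assume h: "(x0,y0) = (x2,y2)"
    then show False using nc o0 o2 by metis
  qed
  obtain s where Z: "fst Z = x0 + s*(x2-x0)" "snd Z = y0 + s*(y2-y0)"
    using param_line[OF m02, of Z] d1 V0 V2 by auto
  have L: "(x3-x1)*(y0+s*(y2-y0)-y1) - (y3-y1)*(x0+s*(x2-x0)-x1) = 0"
    using d2 V1 V3 Z unfolding on_line_thru_def by simp
  define G where "G = Dg (-(y0-y3)) (-(x0-x3)) ((y0-y3)*x3-(x0-x3)*y3) (-(y1-y0)) (-(x1-x0)) ((y1-y0)*x0-(x1-x0)*y0) (-(y2-y1)) (-(x2-x1)) ((y2-y1)*x1-(x2-x1)*y1) (-(y3-y2)) (-(x3-x2)) ((y3-y2)*x2-(x3-x2)*y2) (x0+s*(x2-x0)) (y0+s*(y2-y0))"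
  have DG: "DQ A B A' B' Z = cA*cB*cC*cE*G"
    unfolding DQ_def G_def cA(2-4) cB(2-4) cC(2-4) cE(2-4) Z Dg_def by algebra
  have core: "2 * ((x3-x1)*(y2-y0) - (y3-y1)*(x2-x0)) * G = 0"
    using diag_core[of x3 x1 y2 y0 y3 y1 x2 x0 s] unfolding G_def L by simp
  have K: "(x3-x1)*(y2-y0) - (y3-y1)*(x2-x0) \<noteq> 0"
  proof
    assume K0: "(x3-x1)*(y2-y0) - (y3-y1)*(x2-x0) = 0"
    have "on_line_thru (x0,y0) (x1,y1) (x3,y3)" unfolding on_line_thru_def fst_conv snd_conv
      using L K0 by algebra
    then have "on_line B (x3,y3)" using collinear_on[OF o0(2) o1(1) m01] by blast
    then have "meet A B = (x3,y3)" using meet_eq[OF np(1) o3(2)] by blast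
    then show False using m30 V0 by simp
  qed
  have "G = 0" using core K two by simp
  then show ?thesis using DG by simp
qed

lemma diag_DQ:
  fixes A B A' B' :: "'a::field line"
  assumes two: "(2::'a) \<noteq> 0" and q: "quadrilateral A B A' B'"
    and dp: "affine_diagonal_point A B A' B' Z"
  shows "DQ A B A' B' Z = 0"
proof -
  have np: "\<not> parallel A B" "\<not> parallel B A'" "\<not> parallel A' B'" "\<not> parallel B' A"
    using q unfolding quadrilateral_def by auto
  have zA: "on_line A Z \<Longrightarrow> on_line A' Z \<Longrightarrow> DQ A B A' B' Z = 0" unfolding DQ_alt on_line_ev by simp
  have zB: "on_line B Z \<Longrightarrow> on_line B' Z \<Longrightarrow> DQ A B A' B' Z = 0" unfolding DQ_alt on_line_ev by simp
  from dp consider (a) "on_line A Z \<and> on_line A' Z" | (b) "on_line B Z \<and> on_line B' Z"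
    | (c) "on_line_thru (meet A B) (meet A' B') Z" "on_line_thru (meet B A') (meet B' A) Z"
    unfolding affine_diagonal_point_def by blast
  then show ?thesis
  proof cases
    case a then show ?thesis using zA by blast
  next
    case b then show ?thesis using zB by blast
  next
    case c
    have q1: "quadrilateral B A' B' A" using quad_rot[OF q] .
    have q2: "quadrilateral A' B' A B" using quad_rot[OF q1] .
    have q3: "quadrilateral B' A B A'" using quad_rot[OF q2] .
    consider (i0) "meet A B = meet B A'" | (i1) "meet B A' = meet A' B'" | (i2) "meet A' B' = meet B' A"
      | (i3) "meet B' A = meet A B"
      | (pr) "meet A B \<noteq> meet B A'" "meet B A' \<noteq> meet A' B'" "meet A' B' \<noteq> meet B' A" "meet B' A \<noteq> meet A B"
      by blast
    then show ?thesis
    proof cases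
      case i0
      have "Z = meet A B" using improper_O[OF q i0 c(1) c(2)] .
      then show ?thesis using zA meet_on(1)[OF np(1)] meet_on(2)[OF np(2)] i0 by simp
    next
      case i1
      have "Z = meet B A'" using improper_O[OF q1 i1 c(2) olt_sym[THEN iffD1, OF c(1)]] .
      then show ?thesis using zB meet_on(1)[OF np(2)] meet_on(2)[OF np(3)] i1 by simp
    next
      case i2
      have "Z = meet A' B'"
        using improper_O[OF q2 i2 olt_sym[THEN iffD1, OF c(1)] olt_sym[THEN iffD1, OF c(2)]] .
      then show ?thesis using zA meet_on(1)[OF np(3)] meet_on(2)[OF np(4)] i2 by simp
    next
      case i3
      have "Z = meet B' A" using improper_O[OF q3 i3 olt_sym[THEN iffD1, OF c(2)] c(1)] .
      then show ?thesis using zB meet_on(1)[OF np(4)] meet_on(2)[OF np(1)] i3 by simp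
    next
      case pr
      show ?thesis using proper_diag[OF two q pr c] .
    qed
  qed
qed


lemma PhiQ_Phg: "PhiQ A B A' B' X Y = Phg (tL A) (uL A) (tL B) (uL B) (tL A') (uL A') (tL B') (uL B') X Y"
  by (simp add: PhiQ_def Phg_def alphaQ_def alg_def betaQ_def beg_def gammaQ_def gag_def)

theorem theorem5p1:
  fixes A B A' B' :: "'a::field line" and a b h k :: 'a
  assumes char: "(2::'a) \<noteq> 0"
    and quad: "quadrilateral A B A' B'"
    and cen: "centroid A B A' B' = (h, k)"
    and diag: "affine_diagonal_point A B A' B' (a, b)"
  shows "bisector_locus A B A' B' =
           Aff ` {(x, y). PhiQ A B A' B' (x - h) (y - k) = PhiQ A B A' B' (a - h) (b - k)}"
proof -
  have np: "\<not> parallel A B" "\<not> parallel B A'" "\<not> parallel A' B'" "\<not> parallel B' A"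
    using quad unfolding quadrilateral_def by auto
  define V0 where "V0 = meet A B"
  define V1 where "V1 = meet B A'"
  define V2 where "V2 = meet A' B'"
  define V3 where "V3 = meet B' A"
  have o: "on_line A V0" "on_line B V0" "on_line B V1" "on_line A' V1"
    "on_line A' V2" "on_line B' V2" "on_line B' V3" "on_line A V3"
    using meet_on[OF np(1)] meet_on[OF np(2)] meet_on[OF np(3)] meet_on[OF np(4)]
    unfolding V0_def V1_def V2_def V3_def by auto
  have hc: "centroid A B A' B' = ((fst V0 + (fst V1 + (fst V2 + fst V3)))/4, (snd V0 + (snd V1 + (snd V2 + snd V3)))/4)"
    by (simp add: centroid_def vertices_def V0_def V1_def V2_def V3_def)
  have four: "(4::'a) \<noteq> 0"
  proof
    assume "(4::'a) = 0"
    then have "(2::'a) * 2 = 0" by simp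
    then show False using char by (metis mult_eq_0_iff)
  qed
  have hh: "4*h = fst V0 + fst V1 + fst V2 + fst V3" and kk: "4*k = snd V0 + snd V1 + snd V2 + snd V3"
    using cen hc four by (auto simp: add.assoc)
  have cent: "DQ A B A' B' (x,y) + 2*PhiQ A B A' B' (x-h) (y-k) = DQ A B A' B' (a,b) + 2*PhiQ A B A' B' (a-h) (b-k)"
    for x y
    unfolding DQ_def PhiQ_Phg fst_conv snd_conv
    by (rule center_plain[OF o[unfolded on_line_def] hh kk])
  have dz: "DQ A B A' B' (a,b) = 0" using diag_DQ[OF char quad diag] .
  have key: "DQ A B A' B' (x,y) = 0 \<longleftrightarrow> PhiQ A B A' B' (x-h) (y-k) = PhiQ A B A' B' (a-h) (b-k)" for x y
  proof -
    have "DQ A B A' B' (x,y) = 2 * (PhiQ A B A' B' (a-h) (b-k) - PhiQ A B A' B' (x-h) (y-k))"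
      using cent[of x y] dz by (simp add: algebra_simps)
    then show ?thesis using char by auto
  qed
  show ?thesis
  proof (intro set_eqI iffI)
    fix Pt assume "Pt \<in> bisector_locus A B A' B'"
    then obtain P where P: "Pt = Aff P" "DQ A B A' B' P = 0" using locus_DQ[OF char quad] by blast
    obtain x y where "P = (x,y)" by (cases P) auto
    then show "Pt \<in> Aff ` {(x, y). PhiQ A B A' B' (x - h) (y - k) = PhiQ A B A' B' (a - h) (b - k)}"
      using P key by auto
  next
    fix Pt assume "Pt \<in> Aff ` {(x, y). PhiQ A B A' B' (x - h) (y - k) = PhiQ A B A' B' (a - h) (b - k)}"
    then obtain x y where "Pt = Aff (x,y)" "PhiQ A B A' B' (x - h) (y - k) = PhiQ A B A' B' (a - h) (b - k)"
      by auto
    then show "Pt \<in> bisector_locus A B A' B'" using key bisect_from[OF char quad] by auto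
  qed
qed

end
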